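(* Let $G'$ be a connected graph, let $w$ be a vertex of $G'$, let $k\ge 2$, and let $G$ be obtained from $G'$ by adding $k$ new vertices, each adjacent only to $w$. Let $\Delta$ be the distance squared matrix of $G$ and $\Delta_{k+1}$ the distance squared matrix of $G'$. Then either $i_-(\Delta)=k-1+i_-(\Delta_{k+1})$ or $i_-(\Delta)=k+i_-(\Delta_{k+1})$.
   Context: For a connected graph $G$ with vertices $1,\dots,n$, the distance squared matrix $\Delta$ is the $n\times n$ matrix with $(i,j)$ entry $d_{ij}^2$, where $d_{ij}$ is the graph distance between $i$ and $j$. For a real symmetric matrix $M$, $i_-(M)$ denotes the number of negative eigenvalues of $M$ counted with multiplicity. *)

theory Defs
  imports "Jordan_Normal_Form.Char_Poly"
begin

definition simple_graph :: "nat \<Rightarrow> (nat \<Rightarrow> nat \<Rightarrow> bool) \<Rightarrow> bool" where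
  "simple_graph n E \<longleftrightarrow> (\<forall>i j. E i j \<longrightarrow> i < n \<and> j < n) \<and>
     (\<forall>i j. E i j \<longrightarrow> E j i) \<and> (\<forall>i. \<not> E i i)"

definition is_walk :: "nat \<Rightarrow> (nat \<Rightarrow> nat \<Rightarrow> bool) \<Rightarrow> nat list \<Rightarrow> bool" where
  "is_walk n E xs \<longleftrightarrow> xs \<noteq> [] \<and> (\<forall>v\<in>set xs. v < n) \<and>
     (\<forall>i. Suc i < length xs \<longrightarrow> E (xs ! i) (xs ! Suc i))"

definition connected_graph :: "nat \<Rightarrow> (nat \<Rightarrow> nat \<Rightarrow> bool) \<Rightarrow> bool" where
  "connected_graph n E \<longleftrightarrow> simple_graph n E \<and> 0 < n \<and>
     (\<forall>i<n. \<forall>j<n. \<exists>xs. is_walk n E xs \<and> hd xs = i \<and> last xs = j)"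

definition graph_dist :: "nat \<Rightarrow> (nat \<Rightarrow> nat \<Rightarrow> bool) \<Rightarrow> nat \<Rightarrow> nat \<Rightarrow> nat" where
  "graph_dist n E i j = (LEAST l. \<exists>xs. is_walk n E xs \<and> hd xs = i \<and> last xs = j \<and> length xs = Suc l)"

definition dist_sq_matrix :: "nat \<Rightarrow> (nat \<Rightarrow> nat \<Rightarrow> bool) \<Rightarrow> real mat" where
  "dist_sq_matrix n E = mat n n (\<lambda>(i, j). (real (graph_dist n E i j))^2)"

definition neg_inertia :: "real mat \<Rightarrow> nat" where
  "neg_inertia M = (\<Sum>a\<in>{a. a < 0 \<and> eigenvalue M a}. order a (char_poly M))"

definition add_pendants :: "nat \<Rightarrow> (nat \<Rightarrow> nat \<Rightarrow> bool) \<Rightarrow> nat \<Rightarrow> nat \<Rightarrow> nat \<Rightarrow> nat \<Rightarrow> bool" where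
  "add_pendants m E w k i j \<longleftrightarrow> (i < m \<and> j < m \<and> E i j) \<or>
     (i = w \<and> m \<le> j \<and> j < m + k) \<or> (j = w \<and> m \<le> i \<and> i < m + k)"

end

theory Submission
  imports Defs
begin


lemma is_walk_succ: "is_walk n E xs \<longleftrightarrow> xs \<noteq> [] \<and> set xs \<subseteq> {..<n} \<and> successively E xs"
  unfolding is_walk_def successively_conv_nth by auto

lemma Least_eq_mono:
  assumes "\<And>l. P l \<Longrightarrow> \<exists>l'\<le>l. Q l'" "\<And>l. Q l \<Longrightarrow> \<exists>l'\<le>l. P l'"
  shows "(LEAST l::nat. P l) = (LEAST l. Q l)"
proof (cases "\<exists>l. P l")
  case True
  then obtain l2 where "Q l2" using assms(1) by blast
  hence Qex: "\<exists>l. Q l" by blast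
  have P1: "P (Least P)" using True by (rule LeastI_ex)
  have Q1: "Q (Least Q)" using Qex by (rule LeastI_ex)
  obtain a where a: "a \<le> Least P" "Q a" using assms(1)[OF P1] by blast
  obtain b where b: "b \<le> Least Q" "P b" using assms(2)[OF Q1] by blast
  have "Least Q \<le> a" using a(2) by (rule Least_le)
  moreover have "Least P \<le> b" using b(2) by (rule Least_le)
  ultimately show ?thesis using a b by linarith
next
  case False
  hence "\<not> (\<exists>l. Q l)" using assms(2) by blast
  with False have "P = Q" by (auto simp: fun_eq_iff)
  thus ?thesis by simp
qed

lemma graph_dist_sym:
  assumes sym: "\<And>i j. E i j \<Longrightarrow> E j i"
  shows "graph_dist n E i j = graph_dist n E j i"
  unfolding graph_dist_def
proof (rule Least_eq_mono)
  have *: "\<exists>ys. is_walk n E ys \<and> hd ys = b \<and> last ys = a \<and> length ys = Suc l"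
    if "is_walk n E xs" "hd xs = a" "last xs = b" "length xs = Suc l" for xs a b l
  proof (intro exI[of _ "rev xs"] conjI)
    show "is_walk n E (rev xs)" using that(1) sym unfolding is_walk_succ
      by (auto simp: successively_rev elim: successively_mono)
  qed (use that in \<open>auto simp: hd_rev last_rev\<close>)
  fix l
  show "\<exists>xs. is_walk n E xs \<and> hd xs = i \<and> last xs = j \<and> length xs = Suc l \<Longrightarrow>
     \<exists>l'\<le>l. \<exists>xs. is_walk n E xs \<and> hd xs = j \<and> last xs = i \<and> length xs = Suc l'"
    using * by blast
  show "\<exists>xs. is_walk n E xs \<and> hd xs = j \<and> last xs = i \<and> length xs = Suc l \<Longrightarrow>
     \<exists>l'\<le>l. \<exists>xs. is_walk n E xs \<and> hd xs = i \<and> last xs = j \<and> length xs = Suc l'"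
    using * by blast
qed

lemma graph_dist_auto:
  assumes inv: "\<And>x. s (s x) = x" and lt: "\<And>x. x < n \<Longrightarrow> s x < n"
    and E: "\<And>a b. E (s a) (s b) = E a b"
  shows "graph_dist n E (s i) (s j) = graph_dist n E i j"
  unfolding graph_dist_def
proof (rule Least_eq_mono)
  have *: "\<exists>ys. is_walk n E ys \<and> hd ys = s a \<and> last ys = s b \<and> length ys = Suc l"
    if "is_walk n E xs" "hd xs = a" "last xs = b" "length xs = Suc l" for xs a b l
  proof (intro exI[of _ "map s xs"] conjI)
    show "is_walk n E (map s xs)" using that(1) unfolding is_walk_succ
      by (auto simp: successively_map E lt)
  qed (use that in \<open>auto simp: hd_map last_map is_walk_def\<close>)
  fix l
  show "\<exists>xs. is_walk n E xs \<and> hd xs = s i \<and> last xs = s j \<and> length xs = Suc l \<Longrightarrow>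
     \<exists>l'\<le>l. \<exists>xs. is_walk n E xs \<and> hd xs = i \<and> last xs = j \<and> length xs = Suc l'"
    using *[of _ "s i" "s j"] inv by (metis order_refl)
  show "\<exists>xs. is_walk n E xs \<and> hd xs = i \<and> last xs = j \<and> length xs = Suc l \<Longrightarrow>
     \<exists>l'\<le>l. \<exists>xs. is_walk n E xs \<and> hd xs = s i \<and> last xs = s j \<and> length xs = Suc l'"
    using * by blast
qed

lemma prune_walk:
  assumes w: "w < m"
  shows "successively (add_pendants m E w k) xs \<Longrightarrow> xs \<noteq> [] \<Longrightarrow> hd xs < m \<Longrightarrow> last xs < m \<Longrightarrow>
    \<exists>ys. successively E ys \<and> ys \<noteq> [] \<and> hd ys = hd xs \<and> last ys = last xs \<and> set ys \<subseteq> {..<m}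
     \<and> length ys \<le> length xs"
proof (induction "length xs" arbitrary: xs rule: less_induct)
  case less
  show ?case
  proof (cases xs)
    case Nil thus ?thesis using less by simp
  next
    case (Cons a rest)
    show ?thesis
    proof (cases rest)
      case Nil
      thus ?thesis using less Cons by (intro exI[of _ "[a]"]) auto
    next
      case (Cons b rest2)
      note xs = \<open>xs = a # rest\<close> Cons
      have ab: "add_pendants m E w k a b" and sr: "successively (add_pendants m E w k) (b # rest2)"
        using less(2) xs by auto
      have am: "a < m" using less(4) xs by simp
      show ?thesis
      proof (cases "b < m")
        case True
        have Eab: "E a b" using ab True am unfolding add_pendants_def by auto
        obtain ys where ys: "successively E ys" "ys \<noteq> []" "hd ys = b" "last ys = last (b # rest2)"
          "set ys \<subseteq> {..<m}" "length ys \<le> length (b # rest2)"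
          using less(1)[of "b # rest2"] sr True less(5) xs by auto
        show ?thesis
        proof (intro exI[of _ "a # ys"] conjI)
          show "successively E (a # ys)" using ys Eab by (cases ys) auto
        qed (use ys xs am in auto)
      next
        case False
        have aw: "a = w" using ab False am unfolding add_pendants_def by auto
        have "rest2 \<noteq> []" using less(5) xs False by auto
        then obtain c rest3 where r2: "rest2 = c # rest3" by (cases rest2) auto
        have "add_pendants m E w k b c" using sr r2 by simp
        hence cw: "c = w" using False w unfolding add_pendants_def by auto
        have sr2: "successively (add_pendants m E w k) rest2" using sr r2 by simp
        obtain ys where ys: "successively E ys" "ys \<noteq> []" "hd ys = c" "last ys = last rest2"
          "set ys \<subseteq> {..<m}" "length ys \<le> length rest2"
          using less(1)[of rest2] sr2 r2 cw w less(5) xs by auto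
        show ?thesis
          by (intro exI[of _ ys]) (use ys xs r2 cw aw in auto)
      qed
    qed
  qed
qed




lemma graph_dist_refl: "i < n \<Longrightarrow> graph_dist n E i i = 0"
  unfolding graph_dist_def
  by (rule Least_eq_0, rule exI[of _ "[i]"]) (auto simp: is_walk_def)

lemma add_pendants_sym:
  assumes "\<And>i j. E i j \<Longrightarrow> E j i"
  shows "add_pendants m E w k i j \<Longrightarrow> add_pendants m E w k j i"
  using assms unfolding add_pendants_def by auto

lemma gd_inner:
  assumes w: "w < m" and i: "i < m" and j: "j < m"
  shows "graph_dist (m + k) (add_pendants m E w k) i j = graph_dist m E i j"
  unfolding graph_dist_def
proof (rule Least_eq_mono)
  fix l
  assume "\<exists>xs. is_walk (m + k) (add_pendants m E w k) xs \<and> hd xs = i \<and> last xs = j \<and> length xs = Suc l"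
  then obtain xs where xs: "is_walk (m + k) (add_pendants m E w k) xs" "hd xs = i" "last xs = j" "length xs = Suc l"
    by blast
  obtain ys where ys: "successively E ys" "ys \<noteq> []" "hd ys = i" "last ys = j" "set ys \<subseteq> {..<m}"
    "length ys \<le> length xs"
    using prune_walk[OF w, of E k xs] xs i j unfolding is_walk_succ by auto
  obtain l' where l': "length ys = Suc l'" using ys(2) by (cases ys) auto
  show "\<exists>l'\<le>l. \<exists>xs. is_walk m E xs \<and> hd xs = i \<and> last xs = j \<and> length xs = Suc l'"
    using ys l' xs(4) unfolding is_walk_succ by (intro exI[of _ l'] conjI exI[of _ ys]) auto
next
  fix l
  assume "\<exists>xs. is_walk m E xs \<and> hd xs = i \<and> last xs = j \<and> length xs = Suc l"
  then obtain xs where xs: "is_walk m E xs" "hd xs = i" "last xs = j" "length xs = Suc l"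
    by blast
  have "is_walk (m + k) (add_pendants m E w k) xs"
    using xs(1) unfolding is_walk_succ
    by (auto simp: add_pendants_def elim!: successively_mono) 
  thus "\<exists>l'\<le>l. \<exists>xs. is_walk (m + k) (add_pendants m E w k) xs \<and> hd xs = i \<and> last xs = j \<and> length xs = Suc l'"
    using xs by blast
qed

lemma gd_pend:
  assumes w: "w < m" and p: "m \<le> p" "p < m + k" and q: "m \<le> q" "q < m + k" and pq: "p \<noteq> q"
  shows "graph_dist (m + k) (add_pendants m E w k) p q = 2"
  unfolding graph_dist_def
proof (rule Least_equality)
  show "\<exists>xs. is_walk (m + k) (add_pendants m E w k) xs \<and> hd xs = p \<and> last xs = q \<and> length xs = Suc 2"
    using w p q by (intro exI[of _ "[p, w, q]"]) (auto simp: is_walk_succ add_pendants_def)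
  fix l assume "\<exists>xs. is_walk (m + k) (add_pendants m E w k) xs \<and> hd xs = p \<and> last xs = q \<and> length xs = Suc l"
  then obtain xs where xs: "is_walk (m + k) (add_pendants m E w k) xs" "hd xs = p" "last xs = q" "length xs = Suc l"
    by blast
  show "2 \<le> l"
  proof (rule ccontr)
    assume "\<not> 2 \<le> l"
    hence "l = 0 \<or> l = 1" by auto
    thus False
    proof
      assume "l = 0"
      then obtain a where "xs = [a]" using xs(4) by (auto simp: length_Suc_conv)
      thus False using xs pq by simp
    next
      assume "l = 1"
      then obtain a b where ab: "xs = [a, b]" using xs(4) by (auto simp: length_Suc_conv numeral_2_eq_2)
      hence "add_pendants m E w k p q" using xs unfolding is_walk_succ by auto
      thus False using p q w unfolding add_pendants_def by auto
    qed
  qed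
qed

lemma gd_swap:
  assumes w: "w < m" and i: "i < m" and p: "m \<le> p" "p < m + k" and q: "m \<le> q" "q < m + k"
  shows "graph_dist (m + k) (add_pendants m E w k) i p = graph_dist (m + k) (add_pendants m E w k) i q"
proof -
  define s where "s x = (if x = p then q else if x = q then p else x)" for x
  have "graph_dist (m + k) (add_pendants m E w k) (s i) (s q) = graph_dist (m + k) (add_pendants m E w k) i q"
  proof (rule graph_dist_auto)
    show "s (s x) = x" for x unfolding s_def by auto
    show "x < m + k \<Longrightarrow> s x < m + k" for x unfolding s_def using p q by auto
    show "add_pendants m E w k (s a) (s b) = add_pendants m E w k a b" for a b
      unfolding s_def add_pendants_def using p q w by auto
  qed
  moreover have "s i = i" "s q = p" using i p q unfolding s_def by auto
  ultimately show ?thesis by simp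
qed




lemma quad_form_sum:
  fixes A :: "'a :: comm_ring_1 mat"
  assumes A: "A \<in> carrier_mat n n" and x: "x \<in> carrier_vec n"
  shows "x \<bullet> (A *\<^sub>v x) = (\<Sum>i<n. \<Sum>j<n. x$i * A$$(i,j) * x$j)"
  using A x unfolding scalar_prod_def
  by (auto simp: sum_distrib_left mult.assoc atLeast0LessThan scalar_prod_def intro!: sum.cong)

lemma real_vec_sq_pos:
  fixes w :: "real vec"
  assumes w: "w \<in> carrier_vec n" "w \<noteq> 0\<^sub>v n"
  shows "w \<bullet> w > 0"
proof -
  obtain i where i: "i < n" "w $ i \<noteq> 0" using w by (metis eq_vecI carrier_vecD index_zero_vec)
  have "w \<bullet> w = (\<Sum>j\<in>{0..<n}. w$j * w$j)" using w unfolding scalar_prod_def by simp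
  also have "\<dots> > 0"
  proof (rule sum_pos2[of _ i])
    show "0 < w$i * w$i" using i by (metis not_real_square_gt_zero)
  qed (use i in auto)
  finally show ?thesis .
qed

lemma sym_real_eigen:
  fixes A :: "real mat"
  assumes A: "A \<in> carrier_mat n n" and sym: "\<And>i j. i<n \<Longrightarrow> j<n \<Longrightarrow> A$$(i,j) = A$$(j,i)" and n: "n > 0"
  shows "\<exists>r v. v \<in> carrier_vec n \<and> v \<noteq> 0\<^sub>v n \<and> A *\<^sub>v v = r \<cdot>\<^sub>v v"
proof -
  let ?A = "map_mat complex_of_real A"
  have cA: "?A \<in> carrier_mat n n" using A by simp
  obtain as where cp: "char_poly ?A = (\<Prod>a\<leftarrow>as. [:-a,1:])" and len: "length as = n"
    using char_poly_factorized[OF cA] by blast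
  define l where "l = hd as"
  have "l \<in> set as" using len n by (cases as) (auto simp: l_def)
  hence "poly (char_poly ?A) l = 0" unfolding cp
    by (simp add: poly_prod_list prod_list_zero_iff)
  hence "eigenvalue ?A l" using eigenvalue_root_char_poly[OF cA] by simp
  then obtain v where v: "v \<in> carrier_vec n" "v \<noteq> 0\<^sub>v n" "?A *\<^sub>v v = l \<cdot>\<^sub>v v"
    unfolding eigenvalue_def eigenvector_def using cA by auto
  have Av: "(\<Sum>j<n. complex_of_real (A$$(i,j)) * v$j) = l * v$i" if "i < n" for i
  proof -
    have "(?A *\<^sub>v v) $ i = (l \<cdot>\<^sub>v v) $ i" using v(3) by simp
    thus ?thesis using that A v(1)
      by (auto simp: atLeast0LessThan scalar_prod_def)
  qed
  define s where "s = (\<Sum>i<n. v$i * cnj (v$i))"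
  have L: "(\<Sum>i<n. (\<Sum>j<n. complex_of_real (A$$(i,j)) * v$j) * cnj (v$i)) = l * s"
    unfolding s_def sum_distrib_left by (rule sum.cong) (auto simp: Av)
  have R: "(\<Sum>i<n. v$i * cnj (\<Sum>j<n. complex_of_real (A$$(i,j)) * v$j)) = cnj l * s"
    unfolding s_def sum_distrib_left by (rule sum.cong) (auto simp: Av)
  have "(\<Sum>i<n. v$i * cnj (\<Sum>j<n. complex_of_real (A$$(i,j)) * v$j))
      = (\<Sum>i<n. \<Sum>j<n. complex_of_real (A$$(i,j)) * v$i * cnj (v$j))"
    by (simp add: cnj_sum sum_distrib_left mult_ac)
  also have "\<dots> = (\<Sum>j<n. \<Sum>i<n. complex_of_real (A$$(i,j)) * v$i * cnj (v$j))"
    by (rule sum.swap)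
  also have "\<dots> = (\<Sum>i<n. (\<Sum>j<n. complex_of_real (A$$(i,j)) * v$j) * cnj (v$i))"
    by (auto simp: sum_distrib_right sum_distrib_left sym mult_ac intro!: sum.cong)
  finally have "cnj l * s = l * s" using L R by metis
  moreover have "s \<noteq> 0"
  proof -
    obtain i where i: "i < n" "v $ i \<noteq> 0" using v by (metis eq_vecI carrier_vecD index_zero_vec)
    have "s = complex_of_real (\<Sum>i<n. (cmod (v$i))^2)"
      unfolding s_def of_real_sum by (rule sum.cong) (auto simp: complex_mult_cnj cmod_power2)
    moreover have "(\<Sum>i<n. (cmod (v$i))^2) > 0"
      by (rule sum_pos2[of _ i]) (use i in auto)
    ultimately show ?thesis by (metis of_real_eq_0_iff less_irrefl)
  qed
  ultimately have "cnj l = l" by simp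
  hence lr: "l = complex_of_real (Re l)" by (metis Reals_cnj_iff complex_is_Real_iff of_real_Re)
  have "poly (char_poly ?A) (complex_of_real (Re l)) = 0" using \<open>poly (char_poly ?A) l = 0\<close> lr by simp
  hence "poly (char_poly A) (Re l) = 0"
    unfolding of_real_hom.char_poly_hom[OF A] by simp
  hence "eigenvalue A (Re l)" using eigenvalue_root_char_poly[OF A] by simp
  thus ?thesis unfolding eigenvalue_def eigenvector_def using A by auto
qed




lemma householder:
  fixes v :: "real vec"
  assumes v: "v \<in> carrier_vec n" and vv: "v \<bullet> v = 1" and n: "n > 0"
  shows "\<exists>U \<in> carrier_mat n n. transpose_mat U * U = 1\<^sub>m n \<and> (\<forall>i<n. U$$(i,0) = v$i)"
proof -
  define d where "d i j = (if i = j then 1 else 0 :: real)" for i j :: nat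
  define u where "u i = v$i - d i 0" for i
  define \<alpha> where "\<alpha> = (\<Sum>i<n. (u i)^2)"
  define c where "c = 2 / \<alpha>"
  define U where "U = mat n n (\<lambda>(i,j). d i j - c * u i * u j)"
  have vv': "(\<Sum>i<n. (v$i)^2) = 1" using vv v unfolding scalar_prod_def
    by (simp add: atLeast0LessThan power2_eq_square)
  have dsum: "(\<Sum>k<n. d k i * f k) = f i" if "i < n" for i f
  proof -
    have "(\<Sum>k<n. d k i * f k) = (\<Sum>k<n. if k = i then f k else 0)"
      unfolding d_def by (rule sum.cong) auto
    thus ?thesis using that by simp
  qed
  have dsum': "(\<Sum>k<n. f k * d k i) = f i" if "i < n" for i f
    using dsum[OF that, of f] by (simp add: mult.commute)
  have \<alpha>: "\<alpha> = 2 - 2 * v$0"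
  proof -
    have "\<alpha> = (\<Sum>i<n. (v$i)^2 - 2 * (d i 0 * v$i) + d i 0 * d i 0)"
      unfolding \<alpha>_def u_def by (rule sum.cong) (auto simp: d_def power2_eq_square algebra_simps)
    also have "\<dots> = (\<Sum>i<n. (v$i)^2) - 2 * (\<Sum>i<n. d i 0 * v$i) + (\<Sum>i<n. d i 0 * d i 0)"
      by (simp add: sum.distrib sum_subtractf sum_distrib_left)
    also have "\<dots> = 2 - 2 * v$0" using dsum[OF n] vv' by (simp add: d_def)
    finally show ?thesis .
  qed
  have U: "U \<in> carrier_mat n n" unfolding U_def by simp
  have col: "U$$(i,0) = v$i" if i: "i < n" for i
  proof (cases "\<alpha> = 0")
    case True
    have "\<forall>i\<in>{..<n}. (u i)^2 = 0" using True unfolding \<alpha>_def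
      by (subst sum_nonneg_eq_0_iff[symmetric]) auto
    hence "u i = 0" using i by simp
    thus ?thesis using i n True unfolding U_def c_def u_def by (simp add: d_def)
  next
    case False
    have "c * u 0 = -1" using False \<alpha> unfolding c_def u_def d_def by (simp add: field_simps)
    hence "U$$(i,0) = d i 0 + u i" using i n unfolding U_def
      by (simp add: algebra_simps) (metis mult.assoc mult_minus1 add.right_inverse)
    thus ?thesis unfolding u_def by simp
  qed
  have c\<alpha>: "c * c * \<alpha> = 2 * c" unfolding c_def by (cases "\<alpha> = 0") (auto simp: field_simps)
  have orth: "transpose_mat U * U = 1\<^sub>m n"
  proof (rule eq_matI)
    fix i j assume i: "i < dim_row (1\<^sub>m n)" and j: "j < dim_col (1\<^sub>m n)"
    hence i: "i < n" and j: "j < n" by auto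
    have "(transpose_mat U * U) $$ (i,j) = (\<Sum>k<n. (d k i - c * u k * u i) * (d k j - c * u k * u j))"
      using i j U unfolding U_def by (simp add: scalar_prod_def atLeast0LessThan)
    also have "\<dots> = (\<Sum>k<n. d k i * d k j - c * u j * (d k i * u k) - c * u i * (u k * d k j)
         + c * c * u i * u j * (u k)^2)"
      by (rule sum.cong) (auto simp: algebra_simps power2_eq_square)
    also have "\<dots> = (\<Sum>k<n. d k i * d k j) - c * u j * (\<Sum>k<n. d k i * u k) - c * u i * (\<Sum>k<n. u k * d k j)
         + c * c * u i * u j * \<alpha>"
      unfolding \<alpha>_def by (simp add: sum.distrib sum_subtractf sum_distrib_left)
    also have "\<dots> = d i j + (c * c * \<alpha>) * u i * u j - 2 * c * u i * u j"
      using dsum[OF i] dsum'[OF j] by (simp add: algebra_simps d_def)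
    also have "\<dots> = d i j" unfolding c\<alpha> by simp
    finally show "(transpose_mat U * U) $$ (i,j) = 1\<^sub>m n $$ (i,j)" using i j by (simp add: d_def)
  qed (use U in auto)
  show ?thesis using U orth col by blast
qed




lemma assoc3:
  fixes X :: "'a :: semiring_0 mat"
  assumes "X \<in> carrier_mat n n" "Y \<in> carrier_mat n n" "Z \<in> carrier_mat n n" "W \<in> carrier_mat n n"
  shows "X * Y * (Z * W) = X * (Y * Z) * W"
proof -
  have "X * Y * (Z * W) = X * (Y * (Z * W))" using assms by (intro assoc_mult_mat) auto
  also have "Y * (Z * W) = Y * Z * W" using assms by (intro assoc_mult_mat[symmetric]) auto
  also have "X * (Y * Z * W) = X * (Y * Z) * W" using assms by (intro assoc_mult_mat[symmetric]) auto
  finally show ?thesis .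
qed

lemma assoc4:
  fixes X :: "'a :: semiring_0 mat"
  assumes "X \<in> carrier_mat n n" "Y \<in> carrier_mat n n" "Z \<in> carrier_mat n n" "W \<in> carrier_mat n n"
    "V \<in> carrier_mat n n"
  shows "X * Y * Z * (W * V) = X * (Y * Z * W) * V"
proof -
  have "X * Y * Z * (W * V) = X * (Y * Z) * (W * V)" using assms by (subst assoc_mult_mat[of X n n Y n Z n]) auto
  also have "\<dots> = X * (Y * Z * W) * V" using assms by (intro assoc3) auto
  finally show ?thesis .
qed

lemma spectral:
  fixes A :: "real mat"
  shows "A \<in> carrier_mat n n \<Longrightarrow> transpose_mat A = A \<Longrightarrow>
    \<exists>Q D. Q \<in> carrier_mat n n \<and> D \<in> carrier_mat n n \<and> transpose_mat Q * Q = 1\<^sub>m n \<and>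
      diagonal_mat D \<and> transpose_mat Q * A * Q = D"
proof (induction n arbitrary: A)
  case 0
  show ?case
    by (rule exI[of _ "1\<^sub>m 0"], rule exI[of _ A]) (use 0 in \<open>auto simp: diagonal_mat_def\<close>)
next
  case (Suc n)
  have A: "A \<in> carrier_mat (Suc n) (Suc n)" by fact
  have sym: "A$$(i,j) = A$$(j,i)" if "i < Suc n" "j < Suc n" for i j
    using Suc(3) that A by (metis carrier_matD index_transpose_mat(1))
  obtain r w where w: "w \<in> carrier_vec (Suc n)" "w \<noteq> 0\<^sub>v (Suc n)" "A *\<^sub>v w = r \<cdot>\<^sub>v w"
    using sym_real_eigen[OF A sym] by blast
  have ww: "w \<bullet> w > 0" by (rule real_vec_sq_pos[OF w(1,2)])
  define v where "v = (1 / sqrt (w \<bullet> w)) \<cdot>\<^sub>v w"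
  have v: "v \<in> carrier_vec (Suc n)" unfolding v_def using w by simp
  have vv: "v \<bullet> v = 1" unfolding v_def using w(1) ww
    by (simp add: smult_scalar_prod_distrib scalar_prod_smult_distrib[of _ "Suc n"] field_simps)
  have Av: "A *\<^sub>v v = r \<cdot>\<^sub>v v" unfolding v_def using A w
    by (simp add: mult_mat_vec[OF A w(1)] smult_smult_assoc mult.commute)
  obtain U where U: "U \<in> carrier_mat (Suc n) (Suc n)" and UU: "transpose_mat U * U = 1\<^sub>m (Suc n)"
    and Ucol: "\<And>i. i < Suc n \<Longrightarrow> U$$(i,0) = v$i"
    using householder[OF v vv] by blast
  have colU0: "col U 0 = v" using U v Ucol by (intro eq_vecI) auto
  define B where "B = transpose_mat U * A * U"
  have B: "B \<in> carrier_mat (Suc n) (Suc n)" unfolding B_def using U A by simp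
  have Bsym: "transpose_mat B = B"
  proof -
    have 1: "transpose_mat B = transpose_mat U * transpose_mat (transpose_mat U * A)"
      unfolding B_def by (rule transpose_mult) (use U A in auto)
    have 2: "transpose_mat (transpose_mat U * A) = transpose_mat A * U"
      by (subst transpose_mult[of _ "Suc n" "Suc n"]) (use U A in auto)
    have 3: "transpose_mat B = transpose_mat U * (A * U)" using 1 2 Suc(3) by simp
    show ?thesis unfolding 3 unfolding B_def using U A by (simp add: assoc_mult_mat[of _ "Suc n" "Suc n"])
  qed
  have Bcol: "B$$(i,0) = (if i = 0 then r else 0)" if i: "i < Suc n" for i
  proof -
    have e0: "B$$(i,0) = (transpose_mat U * (A * U))$$(i,0)" unfolding B_def using U A
      by (simp add: assoc_mult_mat[of _ "Suc n" "Suc n"])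
    have e1: "(transpose_mat U * (A * U))$$(i,0) = row (transpose_mat U) i \<bullet> col (A * U) 0"
      by (rule index_mult_mat(1)) (use i U A in auto)
    have e2: "row (transpose_mat U) i = col U i" by (rule row_transpose) (use i U in auto)
    have e3: "col (A * U) 0 = A *\<^sub>v col U 0" by (rule col_mult2[OF A U]) auto
    have "B$$(i,0) = col U i \<bullet> (A *\<^sub>v col U 0)" unfolding e0 e1 e2 e3 ..
    also have "\<dots> = r * (col U i \<bullet> col U 0)" unfolding colU0 Av using U i v
      by (simp add: scalar_prod_smult_distrib[of _ "Suc n"])
    also have "col U i \<bullet> col U 0 = (transpose_mat U * U)$$(i,0)" using i U by simp
    also have "\<dots> = (if i = 0 then 1 else 0)" unfolding UU using i by simp
    finally show ?thesis by simp
  qed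
  have Bsym': "B$$(i,j) = B$$(j,i)" if "i < Suc n" "j < Suc n" for i j
    using Bsym that B by (metis carrier_matD index_transpose_mat(1))
  define A' where "A' = mat n n (\<lambda>(i,j). B$$(Suc i, Suc j))"
  have A': "A' \<in> carrier_mat n n" unfolding A'_def by simp
  have A'sym: "transpose_mat A' = A'" unfolding A'_def
    by (rule eq_matI) (auto simp: Bsym')
  have Bblock: "B = four_block_mat (mat 1 1 (\<lambda>_. r)) (0\<^sub>m 1 n) (0\<^sub>m n 1) A'"
  proof (rule eq_matI)
    fix i j assume i: "i < dim_row (four_block_mat (mat 1 1 (\<lambda>_. r)) (0\<^sub>m 1 n) (0\<^sub>m n 1) A')"
      and j: "j < dim_col (four_block_mat (mat 1 1 (\<lambda>_. r)) (0\<^sub>m 1 n) (0\<^sub>m n 1) A')"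
    hence i: "i < Suc n" and j: "j < Suc n" using A' by auto
    show "B $$ (i, j) = four_block_mat (mat 1 1 (\<lambda>_. r)) (0\<^sub>m 1 n) (0\<^sub>m n 1) A' $$ (i, j)"
    proof (cases "j = 0")
      case True thus ?thesis using i A' Bcol[OF i] by (simp add: index_mat_four_block)
    next
      case False
      hence "j = Suc (j - 1)" by simp
      thus ?thesis using i j A' Bcol[OF j] Bsym'[OF i j] False unfolding A'_def
        by (cases "i = 0") (auto simp: index_mat_four_block)
    qed
  qed (use B A' in auto)
  obtain Q' D' where Q': "Q' \<in> carrier_mat n n" and D': "D' \<in> carrier_mat n n"
    and QQ': "transpose_mat Q' * Q' = 1\<^sub>m n" and dD': "diagonal_mat D'"
    and QAQ': "transpose_mat Q' * A' * Q' = D'"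
    using Suc(1)[OF A' A'sym] by blast
  define K where "K = four_block_mat (1\<^sub>m 1) (0\<^sub>m 1 n) (0\<^sub>m n 1) Q'"
  have K: "K \<in> carrier_mat (Suc n) (Suc n)" unfolding K_def
    using four_block_carrier_mat[OF one_carrier_mat Q', of 1 "0\<^sub>m 1 n" "0\<^sub>m n 1"] by simp
  have KT: "transpose_mat K = four_block_mat (1\<^sub>m 1) (0\<^sub>m 1 n) (0\<^sub>m n 1) (transpose_mat Q')"
    unfolding K_def
    by (subst transpose_four_block_mat[of _ 1 1 _ n _ n]) (use Q' in auto)
  define Q where "Q = U * K"
  define D where "D = four_block_mat (mat 1 1 (\<lambda>_. r)) (0\<^sub>m 1 n) (0\<^sub>m n 1) D'"
  have Q: "Q \<in> carrier_mat (Suc n) (Suc n)" unfolding Q_def using U K by simp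
  have D: "D \<in> carrier_mat (Suc n) (Suc n)" unfolding D_def
    using four_block_carrier_mat[OF _ D', of "mat 1 1 (\<lambda>_. r)" 1 1 "0\<^sub>m 1 n" "0\<^sub>m n 1"] by simp
  have QT: "transpose_mat Q = transpose_mat K * transpose_mat U"
    unfolding Q_def using U K by (simp add: transpose_mult)
  have KTK: "transpose_mat K * K = 1\<^sub>m (Suc n)"
    unfolding KT unfolding K_def using Q' QQ'
    by (subst mult_four_block_mat[of _ 1 1 _ n _ n _ _ 1 _ n]) auto
  have "transpose_mat Q * Q = transpose_mat K * (transpose_mat U * U) * K"
    unfolding QT unfolding Q_def using U K
    by (intro assoc3[of _ "Suc n"]) auto
  also have "\<dots> = 1\<^sub>m (Suc n)" unfolding UU using K KTK by simp
  finally have QQ: "transpose_mat Q * Q = 1\<^sub>m (Suc n)" .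
  have "transpose_mat Q * A * Q = transpose_mat K * B * K"
    unfolding QT unfolding Q_def B_def using U K A
    by (intro assoc4[of _ "Suc n"]) auto
  also have "\<dots> = D"
    unfolding KT Bblock unfolding K_def D_def using Q' A' QAQ'[symmetric]
    by (simp add: mult_four_block_mat[of _ 1 1 _ n _ n _ _ 1 _ n])
  finally have QAQ: "transpose_mat Q * A * Q = D" .
  have dD: "diagonal_mat D" unfolding diagonal_mat_def D_def
  proof (intro allI impI)
    fix i j assume i: "i < dim_row (four_block_mat (mat 1 1 (\<lambda>_. r)) (0\<^sub>m 1 n) (0\<^sub>m n 1) D')"
      and j: "j < dim_col (four_block_mat (mat 1 1 (\<lambda>_. r)) (0\<^sub>m 1 n) (0\<^sub>m n 1) D')" and ij: "i \<noteq> j"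
    show "four_block_mat (mat 1 1 (\<lambda>_. r)) (0\<^sub>m 1 n) (0\<^sub>m n 1) D' $$ (i, j) = 0"
      using i j ij D' dD' unfolding diagonal_mat_def
      by (auto simp: index_mat_four_block)
  qed
  show ?case using Q D QQ dD QAQ by blast
qed




definition negdef :: "real mat \<Rightarrow> real mat \<Rightarrow> bool" where
  "negdef A W \<longleftrightarrow> (\<forall>c \<in> carrier_vec (dim_col W). c \<noteq> 0\<^sub>v (dim_col W) \<longrightarrow> (W *\<^sub>v c) \<bullet> (A *\<^sub>v (W *\<^sub>v c)) < 0)"

definition nonnegker :: "real mat \<Rightarrow> real mat \<Rightarrow> bool" where
  "nonnegker A F \<longleftrightarrow> (\<forall>x \<in> carrier_vec (dim_col F). F *\<^sub>v x = 0\<^sub>v (dim_row F) \<longrightarrow> x \<bullet> (A *\<^sub>v x) \<ge> 0)"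

lemma kernel_exists:
  fixes M :: "real mat"
  assumes M: "M \<in> carrier_mat s r" and sr: "s < r"
  shows "\<exists>c \<in> carrier_vec r. c \<noteq> 0\<^sub>v r \<and> M *\<^sub>v c = 0\<^sub>v s"
proof -
  define M' where "M' = mat r r (\<lambda>(i,j). if i < s then M$$(i,j) else 0)"
  have M': "M' \<in> carrier_mat r r" unfolding M'_def by simp
  have "transpose_mat M' *\<^sub>v unit_vec r (r - 1) = 0\<^sub>v r"
    using sr unfolding M'_def by (intro eq_vecI) (auto simp: scalar_prod_def unit_vec_def intro!: sum.neutral)
  moreover have "unit_vec r (r - 1) \<noteq> (0\<^sub>v r :: real vec)"
  proof
    assume "unit_vec r (r - 1) = (0\<^sub>v r :: real vec)"
    hence "unit_vec r (r - 1) $ (r - 1) = (0\<^sub>v r :: real vec) $ (r - 1)" by simp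
    thus False using sr by simp
  qed
  ultimately have "det (transpose_mat M') = 0"
    using M' by (subst det_0_iff_vec_prod_zero[of _ r]) (auto intro!: exI[of _ "unit_vec r (r - 1)"])
  hence "det M' = 0" using det_transpose[OF M'] by simp
  then obtain c where c: "c \<in> carrier_vec r" "c \<noteq> 0\<^sub>v r" "M' *\<^sub>v c = 0\<^sub>v r"
    using det_0_iff_vec_prod_zero[OF M'] by blast
  have "M *\<^sub>v c = 0\<^sub>v s"
  proof (rule eq_vecI)
    fix i assume "i < dim_vec (0\<^sub>v s :: real vec)"
    hence i: "i < s" by simp
    have "(M' *\<^sub>v c) $ i = 0" using c(3) i sr by simp
    thus "(M *\<^sub>v c) $ i = 0\<^sub>v s $ i" using i sr M c(1) unfolding M'_def
      by (simp add: scalar_prod_def)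
  qed (use M in simp)
  thus ?thesis using c by blast
qed

lemma negdef_le:
  assumes A: "A \<in> carrier_mat n n" and W: "W \<in> carrier_mat n r" and nd: "negdef A W"
    and F: "F \<in> carrier_mat s n" and nk: "nonnegker A F"
  shows "r \<le> s"
proof (rule ccontr)
  assume "\<not> r \<le> s"
  hence "s < r" by simp
  then obtain c where c: "c \<in> carrier_vec r" "c \<noteq> 0\<^sub>v r" "(F * W) *\<^sub>v c = 0\<^sub>v s"
    using kernel_exists[of "F * W" s r] F W by auto
  have x: "W *\<^sub>v c \<in> carrier_vec n" using W c by simp
  have "F *\<^sub>v (W *\<^sub>v c) = 0\<^sub>v s" using c(3) F W c(1) by (simp add: assoc_mult_mat_vec)
  hence "(W *\<^sub>v c) \<bullet> (A *\<^sub>v (W *\<^sub>v c)) \<ge> 0" using nk x F unfolding nonnegker_def by auto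
  moreover have "(W *\<^sub>v c) \<bullet> (A *\<^sub>v (W *\<^sub>v c)) < 0" using nd c W unfolding negdef_def by auto
  ultimately show False by simp
qed




lemma order_prod_lin:
  fixes f :: "nat \<Rightarrow> real"
  shows "order a (\<Prod>i\<leftarrow>xs. [:- f i, 1:]) = length (filter (\<lambda>i. f i = a) xs)"
proof (induction xs)
  case Nil thus ?case by (simp add: order_0I)
next
  case (Cons x xs)
  have nz: "(\<Prod>i\<leftarrow>xs. [:- f i, 1:]) \<noteq> 0" by (auto simp: prod_list_zero_iff)
  have "order a ([:- f x, 1:] * (\<Prod>i\<leftarrow>xs. [:- f i, 1:])) = order a [:- f x, 1:] + order a (\<Prod>i\<leftarrow>xs. [:- f i, 1:])"
    by (rule order_mult) (metis nz mult_eq_0_iff pCons_eq_0_iff one_neq_zero)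
  thus ?case using Cons by (simp add: order_linear')
qed

lemma quad_conj:
  fixes A :: "'a :: comm_ring_1 mat"
  assumes Q: "Q \<in> carrier_mat n n" and A: "A \<in> carrier_mat n n" and y: "y \<in> carrier_vec n"
  shows "(Q *\<^sub>v y) \<bullet> (A *\<^sub>v (Q *\<^sub>v y)) = y \<bullet> ((transpose_mat Q * A * Q) *\<^sub>v y)"
proof -
  have M: "transpose_mat Q * A * Q \<in> carrier_mat n n" using Q A by simp
  have "(Q *\<^sub>v y) \<bullet> (A *\<^sub>v (Q *\<^sub>v y)) = (A *\<^sub>v (Q *\<^sub>v y)) \<bullet> (Q *\<^sub>v y)"
    using Q A y by (intro comm_scalar_prod[of _ n]) auto
  also have "\<dots> = (transpose_mat Q *\<^sub>v (A *\<^sub>v (Q *\<^sub>v y))) \<bullet> y"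
    using Q A y by (intro transpose_vec_mult_scalar[symmetric]) auto
  also have "transpose_mat Q *\<^sub>v (A *\<^sub>v (Q *\<^sub>v y)) = (transpose_mat Q * A * Q) *\<^sub>v y"
    using Q A y by (simp add: assoc_mult_mat_vec[of _ n n _ n])
  also have "((transpose_mat Q * A * Q) *\<^sub>v y) \<bullet> y = y \<bullet> ((transpose_mat Q * A * Q) *\<^sub>v y)"
    by (rule comm_scalar_prod[of _ n]) (use M y in auto)
  finally show ?thesis .
qed

lemma diag_quad:
  fixes D :: "real mat"
  assumes D: "D \<in> carrier_mat n n" "diagonal_mat D" and y: "y \<in> carrier_vec n"
  shows "y \<bullet> (D *\<^sub>v y) = (\<Sum>i<n. D$$(i,i) * (y$i)^2)"
proof -
  have "y \<bullet> (D *\<^sub>v y) = (\<Sum>i<n. \<Sum>j<n. y$i * D$$(i,j) * y$j)" by (rule quad_form_sum[OF D(1) y])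
  also have "\<dots> = (\<Sum>i<n. D$$(i,i) * (y$i)^2)"
  proof (rule sum.cong[OF refl])
    fix i assume i: "i \<in> {..<n}"
    have "(\<Sum>j<n. y$i * D$$(i,j) * y$j) = (\<Sum>j<n. if j = i then y$i * D$$(i,j) * y$j else 0)"
      using D i unfolding diagonal_mat_def by (intro sum.cong) auto
    also have "\<dots> = D$$(i,i) * (y$i)^2" using i by (simp add: power2_eq_square)
    finally show "(\<Sum>j<n. y$i * D$$(i,j) * y$j) = D$$(i,i) * (y$i)^2" .
  qed
  finally show ?thesis .
qed

lemma inertia_char:
  fixes A :: "real mat"
  assumes A: "A \<in> carrier_mat n n" and sym: "transpose_mat A = A"
  shows "\<exists>W \<in> carrier_mat n (neg_inertia A). negdef A W"
    and "\<exists>F \<in> carrier_mat (neg_inertia A) n. nonnegker A F"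
proof -
  obtain Q D where Q: "Q \<in> carrier_mat n n" and D: "D \<in> carrier_mat n n"
    and QQ: "transpose_mat Q * Q = 1\<^sub>m n" and dD: "diagonal_mat D" and QAQ: "transpose_mat Q * A * Q = D"
    using spectral[OF A sym] by blast
  have QQ': "Q * transpose_mat Q = 1\<^sub>m n"
    by (rule mat_mult_left_right_inverse[OF _ Q QQ]) (use Q in simp)
  have AQDQ: "A = Q * D * transpose_mat Q"
  proof -
    have "Q * D * transpose_mat Q = Q * (transpose_mat Q * A * Q) * transpose_mat Q" using QAQ by simp
    also have "\<dots> = Q * transpose_mat Q * A * (Q * transpose_mat Q)"
      using Q A by (intro assoc4[symmetric, of _ n]) auto
    also have "\<dots> = A" unfolding QQ' using A by simp
    finally show ?thesis by simp
  qed
  define d where "d i = D$$(i,i)" for i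
  have "similar_mat A D" unfolding similar_mat_def similar_mat_wit_def
    by (rule exI[of _ Q], rule exI[of _ "transpose_mat Q"]) (use Q D A QQ QQ' AQDQ in \<open>auto simp: Let_def\<close>)
  hence "char_poly A = char_poly D" by (rule char_poly_similar)
  also have "\<dots> = (\<Prod>a\<leftarrow>diag_mat D. [:- a, 1:])"
    by (rule char_poly_upper_triangular[OF D]) (use dD D in \<open>auto simp: upper_triangular_def diagonal_mat_def\<close>)
  also have "diag_mat D = map d [0..<n]" unfolding diag_mat_def d_def using D by simp
  finally have cp: "char_poly A = (\<Prod>i\<leftarrow>[0..<n]. [:- d i, 1:])" by (simp add: comp_def)
  define S where "S = {i. i < n \<and> d i < 0}"
  have ev: "eigenvalue A a \<longleftrightarrow> (\<exists>i<n. d i = a)" for a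
    unfolding eigenvalue_root_char_poly[OF A] cp
    by (auto simp: poly_prod_list prod_list_zero_iff)
  have ni: "neg_inertia A = card S"
  proof -
    have set: "{a. a < 0 \<and> eigenvalue A a} = d ` S" unfolding ev S_def by auto
    have "neg_inertia A = (\<Sum>a\<in>d ` S. length (filter (\<lambda>i. d i = a) [0..<n]))"
      unfolding neg_inertia_def set cp order_prod_lin ..
    also have "\<dots> = (\<Sum>a\<in>d ` S. card {i \<in> S. d i = a})"
    proof (rule sum.cong[OF refl])
      fix a assume "a \<in> d ` S"
      hence a: "a < 0" unfolding S_def by auto
      have "length (filter (\<lambda>i. d i = a) [0..<n]) = card {i. i < n \<and> d i = a}"
        unfolding length_filter_conv_card by (rule arg_cong[where f=card]) auto
      also have "{i. i < n \<and> d i = a} = {i \<in> S. d i = a}" using a unfolding S_def by auto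
      finally show "length (filter (\<lambda>i. d i = a) [0..<n]) = card {i \<in> S. d i = a}" .
    qed
    also have "\<dots> = card S"
      using sum.image_gen[of S "\<lambda>_. 1 :: nat" d] unfolding S_def by simp
    finally show ?thesis .
  qed
  define idx where "idx = filter (\<lambda>i. d i < 0) [0..<n]"
  define N where "N = length idx"
  have NS: "N = card S" unfolding N_def idx_def S_def length_filter_conv_card
    by (rule arg_cong[where f=card]) auto
  have idx_dist: "distinct idx" unfolding idx_def by simp
  have idx_lt: "j < N \<Longrightarrow> idx ! j < n" for j unfolding N_def
    using nth_mem[of j idx] unfolding idx_def by auto
  have idx_neg: "j < N \<Longrightarrow> d (idx ! j) < 0" for j unfolding N_def
    using nth_mem[of j idx] unfolding idx_def by auto
  have idx_all: "i < n \<Longrightarrow> d i < 0 \<Longrightarrow> \<exists>j<N. idx ! j = i" for i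
    unfolding N_def using in_set_conv_nth[of i idx] unfolding idx_def by auto
  have idx_inj: "j < N \<Longrightarrow> j' < N \<Longrightarrow> idx ! j' = idx ! j \<longleftrightarrow> j' = j" for j j'
    using nth_eq_iff_index_eq[OF idx_dist] unfolding N_def by auto
  define E where "E = mat n N (\<lambda>(i,j). if idx ! j = i then 1 else (0::real))"
  have E: "E \<in> carrier_mat n N" unfolding E_def by simp
  show "\<exists>W \<in> carrier_mat n (neg_inertia A). negdef A W"
  proof (intro bexI[of _ "Q * E"])
    show "Q * E \<in> carrier_mat n (neg_inertia A)" using Q E ni NS by simp
    show "negdef A (Q * E)" unfolding negdef_def
    proof (intro ballI impI)
      fix c :: "real vec" assume c: "c \<in> carrier_vec (dim_col (Q * E))" and c0: "c \<noteq> 0\<^sub>v (dim_col (Q * E))"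
      hence c: "c \<in> carrier_vec N" and c0: "c \<noteq> 0\<^sub>v N" using E by auto
      define y where "y = E *\<^sub>v c"
      have y: "y \<in> carrier_vec n" unfolding y_def using E c by simp
      have yi: "y $ i = (\<Sum>j<N. if idx ! j = i then c$j else 0)" if "i < n" for i
        unfolding y_def E_def using that c by (auto simp: scalar_prod_def atLeast0LessThan intro!: sum.cong)
      have yidx: "y $ (idx ! j) = c $ j" if "j < N" for j
      proof -
        have "y $ (idx ! j) = (\<Sum>j'<N. if j' = j then c$j' else 0)"
          unfolding yi[OF idx_lt[OF that]] by (rule sum.cong) (use idx_inj that in auto)
        thus ?thesis using that by simp
      qed
      have "(Q * E) *\<^sub>v c = Q *\<^sub>v y" unfolding y_def using Q E c by (simp add: assoc_mult_mat_vec)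
      hence "((Q * E) *\<^sub>v c) \<bullet> (A *\<^sub>v ((Q * E) *\<^sub>v c)) = y \<bullet> (D *\<^sub>v y)"
        using quad_conj[OF Q A y] QAQ by simp
      also have "\<dots> = (\<Sum>i<n. d i * (y$i)^2)" unfolding d_def by (rule diag_quad[OF D dD y])
      also have "\<dots> = (\<Sum>i<n. \<Sum>j<N. if idx ! j = i then d i * c$j * y$i else 0)"
      proof (rule sum.cong[OF refl])
        fix i assume "i \<in> {..<n}"
        hence i: "i < n" by simp
        have "(\<Sum>j<N. if idx ! j = i then d i * c$j * y$i else 0)
            = d i * y$i * (\<Sum>j<N. if idx ! j = i then c$j else 0)"
          by (simp add: sum_distrib_left if_distrib mult_ac cong: if_cong)
        also have "\<dots> = d i * (y$i)^2" by (simp only: yi[OF i, symmetric] power2_eq_square mult.assoc)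
        finally show "d i * (y$i)^2 = (\<Sum>j<N. if idx ! j = i then d i * c$j * y$i else 0)" by simp
      qed
      also have "\<dots> = (\<Sum>j<N. \<Sum>i<n. if i = idx ! j then d i * c$j * y$i else 0)"
        by (subst sum.swap) (auto intro!: sum.cong)
      also have "\<dots> = (\<Sum>j<N. d (idx ! j) * (c$j)^2)"
      proof (rule sum.cong[OF refl])
        fix j assume j: "j \<in> {..<N}"
        have "(\<Sum>i<n. if i = idx ! j then d i * c$j * y$i else 0) = d (idx ! j) * c$j * y$(idx ! j)"
          using idx_lt j by simp
        also have "\<dots> = d (idx ! j) * (c$j)^2" using yidx j by (simp add: power2_eq_square)
        finally show "(\<Sum>i<n. if i = idx ! j then d i * c$j * y$i else 0) = d (idx ! j) * (c$j)^2" .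
      qed
      also have "\<dots> < 0"
      proof -
        obtain j where j: "j < N" "c $ j \<noteq> 0" using c c0 by (metis eq_vecI carrier_vecD index_zero_vec)
        have "0 < (\<Sum>j<N. - d (idx ! j) * (c$j)^2)"
        proof (rule sum_pos2[of _ j])
          show "0 < - d (idx ! j) * (c$j)^2"
            using mult_pos_pos[of "- d (idx ! j)" "(c$j)^2"] idx_neg[OF j(1)] j(2) by simp
          show "0 \<le> - d (idx ! i) * (c$i)^2" if "i \<in> {..<N}" for i
            using idx_neg[of i] that by (intro mult_nonneg_nonneg) auto
        qed (use j in auto)
        thus ?thesis by (simp add: sum_negf)
      qed
      finally show "((Q * E) *\<^sub>v c) \<bullet> (A *\<^sub>v ((Q * E) *\<^sub>v c)) < 0" .
    qed
  qed
  show "\<exists>F \<in> carrier_mat (neg_inertia A) n. nonnegker A F"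
  proof (intro bexI[of _ "transpose_mat E * transpose_mat Q"])
    show "transpose_mat E * transpose_mat Q \<in> carrier_mat (neg_inertia A) n" using Q E ni NS by simp
    show "nonnegker A (transpose_mat E * transpose_mat Q)" unfolding nonnegker_def
    proof (intro ballI impI)
      fix x :: "real vec" assume x: "x \<in> carrier_vec (dim_col (transpose_mat E * transpose_mat Q))"
        and x0: "(transpose_mat E * transpose_mat Q) *\<^sub>v x = 0\<^sub>v (dim_row (transpose_mat E * transpose_mat Q))"
      hence x: "x \<in> carrier_vec n" and x0: "transpose_mat E *\<^sub>v (transpose_mat Q *\<^sub>v x) = 0\<^sub>v N"
        using Q E by (auto simp: assoc_mult_mat_vec)
      define y where "y = transpose_mat Q *\<^sub>v x"
      have y: "y \<in> carrier_vec n" unfolding y_def using Q x by simp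
      have xy: "x = Q *\<^sub>v y" unfolding y_def using Q x
        by (simp add: assoc_mult_mat_vec[symmetric, of _ n n _ n] QQ')
      have y0: "y $ (idx ! j) = 0" if j: "j < N" for j
      proof -
        have "(transpose_mat E *\<^sub>v y) $ j = 0" using x0 j unfolding y_def by simp
        moreover have "(transpose_mat E *\<^sub>v y) $ j = (\<Sum>i<n. (if idx ! j = i then 1 else 0) * y $ i)"
          using j E y unfolding E_def by (auto simp: scalar_prod_def atLeast0LessThan intro!: sum.cong)
        moreover have "(\<Sum>i<n. (if idx ! j = i then 1 else 0) * y $ i) = (\<Sum>i<n. if i = idx ! j then y $ i else 0)"
          by (rule sum.cong) auto
        moreover have "(\<Sum>i<n. if i = idx ! j then y $ i else 0) = y $ (idx ! j)"
          using idx_lt[OF j] by simp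
        ultimately show ?thesis by simp
      qed
      have "x \<bullet> (A *\<^sub>v x) = y \<bullet> (D *\<^sub>v y)" unfolding xy using quad_conj[OF Q A y] QAQ by simp
      also have "\<dots> = (\<Sum>i<n. d i * (y$i)^2)" unfolding d_def by (rule diag_quad[OF D dD y])
      also have "\<dots> \<ge> 0"
      proof (rule sum_nonneg)
        fix i assume i: "i \<in> {..<n}"
        show "0 \<le> d i * (y$i)^2"
        proof (cases "d i < 0")
          case True
          then obtain j where "j < N" "idx ! j = i" using idx_all i by auto
          thus ?thesis using y0 by auto
        qed simp
      qed
      finally show "x \<bullet> (A *\<^sub>v x) \<ge> 0" .
    qed
  qed
qed




lemma sum_split_at:
  fixes m k :: nat
  shows "(\<Sum>i<m+k. f i) = (\<Sum>i<m. f i) + (\<Sum>i\<in>{m..<m+k}. f i)"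
  using sum.atLeastLessThan_concat[of 0 m "m+k" f] by (simp add: atLeast0LessThan)

lemma quad_split:
  fixes D :: "real mat" and D' :: "real mat" and x :: "real vec"
  assumes D: "D \<in> carrier_mat (m+k) (m+k)" and D': "D' \<in> carrier_mat m m"
    and x: "x \<in> carrier_vec (m+k)"
    and F4: "\<And>i j. i < m \<Longrightarrow> j < m \<Longrightarrow> D$$(i,j) = D'$$(i,j)"
    and F2: "\<And>i j. i < m \<Longrightarrow> m \<le> j \<Longrightarrow> j < m+k \<Longrightarrow> D$$(i,j) = \<beta> i"
    and F2': "\<And>i j. i < m \<Longrightarrow> m \<le> j \<Longrightarrow> j < m+k \<Longrightarrow> D$$(j,i) = \<beta> i"
    and F3: "\<And>i j. m \<le> i \<Longrightarrow> i < m+k \<Longrightarrow> m \<le> j \<Longrightarrow> j < m+k \<Longrightarrow> D$$(i,j) = (if i = j then 0 else 4)"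
  shows "x \<bullet> (D *\<^sub>v x) = vec m (\<lambda>i. x$i) \<bullet> (D' *\<^sub>v vec m (\<lambda>i. x$i))
     + 2 * (\<Sum>i<m. x$i * \<beta> i) * (\<Sum>j\<in>{m..<m+k}. x$j)
     + 4 * ((\<Sum>j\<in>{m..<m+k}. x$j)^2 - (\<Sum>j\<in>{m..<m+k}. (x$j)^2))"
proof -
  let ?P = "{m..<m+k}"
  let ?S = "\<Sum>j\<in>?P. x$j"
  have T: "x \<bullet> (D *\<^sub>v x) = (\<Sum>i<m+k. \<Sum>j<m+k. x$i * D$$(i,j) * x$j)" by (rule quad_form_sum[OF D x])
  have T2: "(\<Sum>i<m+k. \<Sum>j<m+k. x$i * D$$(i,j) * x$j) =
      (\<Sum>i<m. \<Sum>j<m. x$i * D$$(i,j) * x$j) + (\<Sum>i<m. \<Sum>j\<in>?P. x$i * D$$(i,j) * x$j)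
      + ((\<Sum>i\<in>?P. \<Sum>j<m. x$i * D$$(i,j) * x$j) + (\<Sum>i\<in>?P. \<Sum>j\<in>?P. x$i * D$$(i,j) * x$j))"
    by (simp only: sum_split_at sum.distrib)
  have B1: "(\<Sum>i<m. \<Sum>j<m. x$i * D$$(i,j) * x$j) = vec m (\<lambda>i. x$i) \<bullet> (D' *\<^sub>v vec m (\<lambda>i. x$i))"
    by (subst quad_form_sum[OF D']) (auto simp: F4 intro!: sum.cong)
  have B2: "(\<Sum>i<m. \<Sum>j\<in>?P. x$i * D$$(i,j) * x$j) = (\<Sum>i<m. x$i * \<beta> i) * ?S"
  proof -
    have "(\<Sum>i<m. \<Sum>j\<in>?P. x$i * D$$(i,j) * x$j) = (\<Sum>i<m. (x$i * \<beta> i) * ?S)"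
    proof (rule sum.cong[OF refl])
      fix i assume "i \<in> {..<m}"
      hence "(\<Sum>j\<in>?P. x$i * D$$(i,j) * x$j) = (\<Sum>j\<in>?P. (x$i * \<beta> i) * x$j)"
        by (intro sum.cong) (auto simp: F2)
      thus "(\<Sum>j\<in>?P. x$i * D$$(i,j) * x$j) = (x$i * \<beta> i) * ?S" by (simp add: sum_distrib_left)
    qed
    thus ?thesis by (simp add: sum_distrib_right)
  qed
  have B3: "(\<Sum>i\<in>?P. \<Sum>j<m. x$i * D$$(i,j) * x$j) = (\<Sum>i<m. x$i * \<beta> i) * ?S"
  proof -
    have "(\<Sum>i\<in>?P. \<Sum>j<m. x$i * D$$(i,j) * x$j) = (\<Sum>j<m. \<Sum>i\<in>?P. x$i * D$$(i,j) * x$j)"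
      by (rule sum.swap)
    also have "\<dots> = (\<Sum>j<m. (x$j * \<beta> j) * ?S)"
    proof (rule sum.cong[OF refl])
      fix j assume "j \<in> {..<m}"
      hence "(\<Sum>i\<in>?P. x$i * D$$(i,j) * x$j) = (\<Sum>i\<in>?P. (x$j * \<beta> j) * x$i)"
        by (intro sum.cong) (auto simp: F2')
      thus "(\<Sum>i\<in>?P. x$i * D$$(i,j) * x$j) = (x$j * \<beta> j) * ?S" by (simp add: sum_distrib_left)
    qed
    finally show ?thesis by (simp add: sum_distrib_right)
  qed
  have B4: "(\<Sum>i\<in>?P. \<Sum>j\<in>?P. x$i * D$$(i,j) * x$j) = (\<Sum>i\<in>?P. 4 * x$i * ?S - 4 * (x$i)^2)"
  proof (rule sum.cong[OF refl])
    fix i assume i: "i \<in> ?P"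
    have "(\<Sum>j\<in>?P. x$i * D$$(i,j) * x$j) = (\<Sum>j\<in>?P. 4 * x$i * x$j - (if j = i then 4 * x$i * x$j else 0))"
      using i by (intro sum.cong) (auto simp: F3)
    also have "\<dots> = 4 * x$i * ?S - 4 * (x$i)^2"
      using i by (simp add: sum_subtractf sum_distrib_left power2_eq_square)
    finally show "(\<Sum>j\<in>?P. x$i * D$$(i,j) * x$j) = 4 * x$i * ?S - 4 * (x$i)^2" .
  qed
  have B5: "(\<Sum>i\<in>?P. 4 * x$i * ?S - 4 * (x$i)^2) = 4 * (?S^2 - (\<Sum>j\<in>?P. (x$j)^2))"
  proof -
    have a: "(\<Sum>i\<in>?P. 4 * x$i * ?S) = 4 * ?S * ?S"
      by (simp add: sum_distrib_right[symmetric] sum_distrib_left[symmetric])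
    have b: "(\<Sum>i\<in>?P. 4 * (x$i)^2) = 4 * (\<Sum>j\<in>?P. (x$j)^2)"
      by (simp add: sum_distrib_left[symmetric])
    show ?thesis by (simp only: sum_subtractf a b right_diff_distrib) (simp add: power2_eq_square)
  qed
  show ?thesis unfolding T T2 B1 B2 B3 B4 B5 by simp
qed




theorem corollary3p2:
  fixes m k w :: nat and E' :: "nat \<Rightarrow> nat \<Rightarrow> bool"
  assumes "connected_graph m E'" and "w < m" and "k \<ge> 2"
  shows "neg_inertia (dist_sq_matrix (m + k) (add_pendants m E' w k))
           = k - 1 + neg_inertia (dist_sq_matrix m E')
       \<or> neg_inertia (dist_sq_matrix (m + k) (add_pendants m E' w k))
           = k + neg_inertia (dist_sq_matrix m E')"
proof -
  note conn = assms(1) and w = assms(2) and k2 = assms(3)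
  define G where "G = add_pendants m E' w k"
  define \<Delta> where "\<Delta> = dist_sq_matrix (m + k) G"
  define \<Delta>' where "\<Delta>' = dist_sq_matrix m E'"
  have symE: "\<And>i j. E' i j \<Longrightarrow> E' j i" using conn unfolding connected_graph_def simple_graph_def by blast
  have symG: "\<And>i j. G i j \<Longrightarrow> G j i" unfolding G_def by (rule add_pendants_sym[of E']) (rule symE)
  have D: "\<Delta> \<in> carrier_mat (m+k) (m+k)" unfolding \<Delta>_def dist_sq_matrix_def by simp
  have D': "\<Delta>' \<in> carrier_mat m m" unfolding \<Delta>'_def dist_sq_matrix_def by simp
  have Dij: "\<Delta>$$(i,j) = (real (graph_dist (m+k) G i j))^2" if "i < m+k" "j < m+k" for i j
    using that unfolding \<Delta>_def dist_sq_matrix_def by simp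
  have D'ij: "\<Delta>'$$(i,j) = (real (graph_dist m E' i j))^2" if "i < m" "j < m" for i j
    using that unfolding \<Delta>'_def dist_sq_matrix_def by simp
  have Dsym: "transpose_mat \<Delta> = \<Delta>"
    using D by (intro eq_matI) (auto simp: Dij graph_dist_sym[OF symG])
  have D'sym: "transpose_mat \<Delta>' = \<Delta>'"
    using D' by (intro eq_matI) (auto simp: D'ij graph_dist_sym[OF symE])
  have F4: "\<Delta>$$(i,j) = \<Delta>'$$(i,j)" if "i < m" "j < m" for i j
    using that by (simp add: Dij D'ij G_def gd_inner[OF w])
  define \<beta> where "\<beta> i = \<Delta>$$(i,m)" for i
  have F2: "\<Delta>$$(i,j) = \<beta> i" if "i < m" "m \<le> j" "j < m+k" for i j
  proof -
    have "graph_dist (m+k) G i j = graph_dist (m+k) G i m" unfolding G_def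
      by (rule gd_swap[OF w]) (use that k2 in auto)
    thus ?thesis using that k2 unfolding \<beta>_def by (simp add: Dij)
  qed
  have F2': "\<Delta>$$(j,i) = \<beta> i" if "i < m" "m \<le> j" "j < m+k" for i j
    using F2[OF that] that by (simp add: Dij graph_dist_sym[OF symG])
  have F3: "\<Delta>$$(i,j) = (if i = j then 0 else 4)" if "m \<le> i" "i < m+k" "m \<le> j" "j < m+k" for i j
    using that by (simp add: Dij G_def gd_pend[OF w] graph_dist_refl)
  note qs = quad_split[OF D D' _ F4 F2 F2' F3]
  define a where "a = neg_inertia \<Delta>'"
  define b where "b = neg_inertia \<Delta>"
  obtain W' where W': "W' \<in> carrier_mat m a" and ndW': "negdef \<Delta>' W'"
    using inertia_char(1)[OF D' D'sym] unfolding a_def by blast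
  obtain F' where F': "F' \<in> carrier_mat a m" and nkF': "nonnegker \<Delta>' F'"
    using inertia_char(2)[OF D' D'sym] unfolding a_def by blast
  obtain Wd where Wd: "Wd \<in> carrier_mat (m+k) b" and ndWd: "negdef \<Delta> Wd"
    using inertia_char(1)[OF D Dsym] unfolding b_def by blast
  obtain Fd where Fd: "Fd \<in> carrier_mat b (m+k)" and nkFd: "nonnegker \<Delta> Fd"
    using inertia_char(2)[OF D Dsym] unfolding b_def by blast
  define K where "K = k - 1"
  have K: "K < k" "m + K < m + k" using k2 unfolding K_def by auto
  define W where "W = mat (m+k) (a+K) (\<lambda>(i,j). if j < a then (if i < m then W'$$(i,j) else 0)
      else (if i = m + (j - a) then 1 else if i = m + K then -1 else (0::real)))"
  have W: "W \<in> carrier_mat (m+k) (a+K)" unfolding W_def by simp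
  have ndW: "negdef \<Delta> W" unfolding negdef_def
  proof (intro ballI impI)
    fix c :: "real vec" assume c: "c \<in> carrier_vec (dim_col W)" and c0: "c \<noteq> 0\<^sub>v (dim_col W)"
    hence c: "c \<in> carrier_vec (a+K)" and c0: "c \<noteq> 0\<^sub>v (a+K)" using W by auto
    define x where "x = W *\<^sub>v c"
    have x: "x \<in> carrier_vec (m+k)" using W c by (simp add: x_def)
    have xi: "x$i = (\<Sum>j<a+K. W$$(i,j) * c$j)" if "i < m+k" for i
      using that W c unfolding x_def by (auto simp: scalar_prod_def atLeast0LessThan)
    define c1 where "c1 = vec a (\<lambda>j. c$j)"
    have c1: "c1 \<in> carrier_vec a" unfolding c1_def by simp
    have x'eq: "vec m (\<lambda>i. x$i) = W' *\<^sub>v c1"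
    proof (rule eq_vecI)
      fix i assume "i < dim_vec (W' *\<^sub>v c1)" hence i: "i < m" using W' by simp
      have "x$i = (\<Sum>j<a. W$$(i,j) * c$j) + (\<Sum>j\<in>{a..<a+K}. W$$(i,j) * c$j)"
        using xi[of i] i by (simp add: sum_split_at)
      also have "(\<Sum>j\<in>{a..<a+K}. W$$(i,j) * c$j) = 0"
        using i unfolding W_def by (intro sum.neutral) auto
      also have "(\<Sum>j<a. W$$(i,j) * c$j) = (\<Sum>j<a. W'$$(i,j) * c1$j)"
        using i unfolding W_def c1_def by (intro sum.cong) auto
      also have "\<dots> = (W' *\<^sub>v c1) $ i" using i W' c1 by (auto simp: scalar_prod_def atLeast0LessThan)
      finally show "vec m (\<lambda>i. x$i) $ i = (W' *\<^sub>v c1) $ i" using i by simp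
    qed (use W' in simp)
    have colsum: "(\<Sum>i\<in>{m..<m+k}. W$$(i,j)) = 0" if j: "j < a+K" for j
    proof (cases "j < a")
      case True thus ?thesis using that unfolding W_def by (intro sum.neutral) auto
    next
      case False
      define p where "p = m + (j - a)"
      define q where "q = m + K"
      have pq: "p \<noteq> q" "p \<in> {m..<m+k}" "q \<in> {m..<m+k}" using False j K unfolding p_def q_def by auto
      have "(\<Sum>i\<in>{m..<m+k}. W$$(i,j)) = (\<Sum>i\<in>{m..<m+k}. (if i = p then 1 else 0) + (if i = q then -1 else 0))"
        using False j pq(1) unfolding W_def p_def q_def by (intro sum.cong) auto
      also have "\<dots> = 0" using pq by (simp add: sum.distrib)
      finally show ?thesis .
    qed
    have S0: "(\<Sum>i\<in>{m..<m+k}. x$i) = 0"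
    proof -
      have "(\<Sum>i\<in>{m..<m+k}. x$i) = (\<Sum>i\<in>{m..<m+k}. \<Sum>j<a+K. W$$(i,j) * c$j)"
        using xi by (intro sum.cong) auto
      also have "\<dots> = (\<Sum>j<a+K. \<Sum>i\<in>{m..<m+k}. W$$(i,j) * c$j)" by (rule sum.swap)
      also have "\<dots> = (\<Sum>j<a+K. (\<Sum>i\<in>{m..<m+k}. W$$(i,j)) * c$j)" by (simp add: sum_distrib_right)
      also have "\<dots> = 0" using colsum by simp
      finally show ?thesis .
    qed
    have Q: "x \<bullet> (\<Delta> *\<^sub>v x) = vec m (\<lambda>i. x$i) \<bullet> (\<Delta>' *\<^sub>v vec m (\<lambda>i. x$i)) - 4 * (\<Sum>j\<in>{m..<m+k}. (x$j)^2)"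
      using qs[OF x] S0 by simp
    have SSnn: "(\<Sum>j\<in>{m..<m+k}. (x$j)^2) \<ge> 0" by (simp add: sum_nonneg)
    show "(W *\<^sub>v c) \<bullet> (\<Delta> *\<^sub>v (W *\<^sub>v c)) < 0"
    proof (cases "c1 = 0\<^sub>v a")
      case False
      have "(W' *\<^sub>v c1) \<bullet> (\<Delta>' *\<^sub>v (W' *\<^sub>v c1)) < 0" using ndW' W' c1 False unfolding negdef_def by auto
      thus ?thesis using Q SSnn x'eq unfolding x_def[symmetric] by simp
    next
      case True
      have x'0: "vec m (\<lambda>i. x$i) = 0\<^sub>v m" unfolding x'eq True using W' by (intro eq_vecI) auto
      obtain j where j: "j < a+K" "c$j \<noteq> 0" using c c0 by (metis eq_vecI carrier_vecD index_zero_vec)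
      have ja: "a \<le> j"
      proof (rule ccontr)
        assume "\<not> a \<le> j"
        hence "c1 $ j = c $ j" unfolding c1_def by simp
        thus False using True j \<open>\<not> a \<le> j\<close> by simp
      qed
      define t where "t = j - a"
      have t: "t < K" "j = a + t" using ja j unfolding t_def by auto
      have xt: "x$(m+t) = c$j"
      proof -
        have "x$(m+t) = (\<Sum>j'<a+K. (if j' = j then c$j' else 0))"
          unfolding xi[of "m+t", OF add_strict_left_mono[OF less_trans[OF t(1) K(1)]]]
          using t K unfolding W_def by (intro sum.cong) auto
        thus ?thesis using j by simp
      qed
      have "(\<Sum>j\<in>{m..<m+k}. (x$j)^2) > 0"
        by (rule sum_pos2[of _ "m+t"]) (use xt j t K in auto)
      moreover have "vec m (\<lambda>i. x$i) \<bullet> (\<Delta>' *\<^sub>v vec m (\<lambda>i. x$i)) = 0" unfolding x'0 using D' by simp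
      ultimately show ?thesis using Q unfolding x_def[symmetric] by simp
    qed
  qed
  have lower: "a + K \<le> b" by (rule negdef_le[OF D W ndW Fd nkFd])
  define F where "F = mat (a+k) (m+k) (\<lambda>(r,i). if r < a then (if i < m then F'$$(r,i) else 0)
      else (if i = m + (r - a) then 1 else (0::real)))"
  have F: "F \<in> carrier_mat (a+k) (m+k)" unfolding F_def by simp
  have nkF: "nonnegker \<Delta> F" unfolding nonnegker_def
  proof (intro ballI impI)
    fix x :: "real vec" assume x: "x \<in> carrier_vec (dim_col F)" and Fx: "F *\<^sub>v x = 0\<^sub>v (dim_row F)"
    hence x: "x \<in> carrier_vec (m+k)" and Fx: "F *\<^sub>v x = 0\<^sub>v (a+k)" using F by auto
    have Fxr: "(F *\<^sub>v x)$r = (\<Sum>i<m+k. F$$(r,i) * x$i)" if "r < a+k" for r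
      using that F x by (auto simp: scalar_prod_def atLeast0LessThan)
    have xP: "x$(m+t) = 0" if t: "t < k" for t
    proof -
      have "(F *\<^sub>v x)$(a+t) = (\<Sum>i<m+k. (if i = m+t then x$i else 0))"
        unfolding Fxr[of "a+t", OF add_strict_left_mono[OF t]] unfolding F_def
        by (intro sum.cong) (use t in auto)
      also have "\<dots> = x$(m+t)" using t by simp
      finally show ?thesis using Fx t by simp
    qed
    define x' where "x' = vec m (\<lambda>i. x$i)"
    have F'x': "F' *\<^sub>v x' = 0\<^sub>v a"
    proof (rule eq_vecI)
      fix r assume "r < dim_vec (0\<^sub>v a :: real vec)" hence r: "r < a" by simp
      have "(F' *\<^sub>v x')$r = (\<Sum>i<m. F'$$(r,i) * x$i)" using r F' unfolding x'_def
        by (auto simp: scalar_prod_def atLeast0LessThan)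
      also have "\<dots> = (\<Sum>i<m. F$$(r,i) * x$i)" using r unfolding F_def by (intro sum.cong) auto
      also have "\<dots> = (\<Sum>i<m+k. F$$(r,i) * x$i)"
      proof -
        have "(\<Sum>i\<in>{m..<m+k}. F$$(r,i) * x$i) = 0" using r unfolding F_def by (intro sum.neutral) auto
        thus ?thesis by (simp add: sum_split_at)
      qed
      also have "\<dots> = (F *\<^sub>v x)$r" using Fxr r by simp
      also have "\<dots> = 0" using Fx r by simp
      finally show "(F' *\<^sub>v x')$r = 0\<^sub>v a $ r" using r by simp
    qed (use F' in simp)
    have nn: "x' \<bullet> (\<Delta>' *\<^sub>v x') \<ge> 0" using nkF' F' F'x' unfolding nonnegker_def x'_def by auto
    have xP': "x$j = 0" if "j \<in> {m..<m+k}" for j using xP[of "j - m"] that by auto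
    have S0: "(\<Sum>j\<in>{m..<m+k}. x$j) = 0" using xP' by simp
    have SS0: "(\<Sum>j\<in>{m..<m+k}. (x$j)^2) = 0" using xP' by simp
    show "x \<bullet> (\<Delta> *\<^sub>v x) \<ge> 0" using qs[OF x] S0 SS0 nn unfolding x'_def by simp
  qed
  have upper: "b \<le> a + k" by (rule negdef_le[OF D Wd ndWd F nkF])
  have "b = k - 1 + a \<or> b = k + a" using lower upper k2 unfolding K_def by arith
  thus ?thesis unfolding b_def a_def \<Delta>_def \<Delta>'_def G_def .
qed


end
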